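(* Let $0<p\le2$ and let $G$ be the additive group of finitely supported real sequences $r=(r_i)_{i\in\mathbb{N}}$. The function $r\mapsto\|r\|_p^p=\sum_i|r_i|^p$ from $G$ to $\mathbb{R}_+$ is a morphism on an arbitrary large subset of $G$: for every $N,M\in\mathbb{N}$ and every $s_1,\dots,s_M\in\mathbb{R}_+$ there exist $g_{n,k}\in G$ ($1\le n\le N$, $1\le k\le M$) such that $\|g_{m,k}-g_{n,j}\|_p^p=s_j+s_k$ for all $j,k$ and all $n\ne m$.
   Context: $\mathbb{R}_+=[0,\infty)$. The paper denotes this group by $\mathbb{R}^{\mathbb{N}}$ (countably many copies of $\mathbb{R}$, elements having finitely many nonzero coordinates), with group operation coordinatewise addition. *)

theory Defs
  imports Complex_Main
begin

definition fin_supp :: "(nat \<Rightarrow> real) \<Rightarrow> bool" where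
  "fin_supp r \<longleftrightarrow> finite {i. r i \<noteq> 0}"

definition lp_pow :: "real \<Rightarrow> (nat \<Rightarrow> real) \<Rightarrow> real" where
  "lp_pow p r = (\<Sum>i\<in>{i. r i \<noteq> 0}. \<bar>r i\<bar> powr p)"

end

theory Submission
  imports Defs "HOL-Library.Nat_Bijection"
begin

lemma lp_pow_superset:
  assumes "finite S" "{i. r i \<noteq> 0} \<subseteq> S"
  shows "lp_pow p r = (\<Sum>i\<in>S. \<bar>r i\<bar> powr p)"
  unfolding lp_pow_def
  by (rule sum.mono_neutral_left) (use assms in auto)

lemma powr_inv_cancel:
  assumes "(0::real) \<le> x" "0 < p"
  shows "\<bar>x powr (1/p)\<bar> powr p = x"
proof -
  have "\<bar>x powr (1/p)\<bar> = x powr (1/p)" by simp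
  also have "(x powr (1/p)) powr p = x powr (1/p * p)" by (simp add: powr_powr)
  also have "\<dots> = x" using assms by simp
  finally show ?thesis by simp
qed

theorem proposition4p11:
  fixes p :: real and N M :: nat and s :: "nat \<Rightarrow> real"
  assumes "0 < p" and "p \<le> 2"
    and "\<forall>k\<in>{1..M}. s k \<ge> 0"
  shows "\<exists>g :: nat \<Rightarrow> nat \<Rightarrow> (nat \<Rightarrow> real).
           (\<forall>n\<in>{1..N}. \<forall>k\<in>{1..M}. fin_supp (g n k)) \<and>
           (\<forall>n\<in>{1..N}. \<forall>m\<in>{1..N}. \<forall>j\<in>{1..M}. \<forall>k\<in>{1..M}.
              n \<noteq> m \<longrightarrow> lp_pow p (g m k - g n j) = s j + s k)"
proof -
  define g :: "nat \<Rightarrow> nat \<Rightarrow> (nat \<Rightarrow> real)" where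
    "g = (\<lambda>n k i. if i = prod_encode (n,k) then s k powr (1/p) else 0)"
  have fs: "fin_supp (g n k)" for n k
    unfolding fin_supp_def g_def
    by (rule finite_subset[of _ "{prod_encode (n,k)}"]) auto
  have main: "lp_pow p (g m k - g n j) = s j + s k"
    if "n \<noteq> m" "j \<in> {1..M}" "k \<in> {1..M}" for n m j k
  proof -
    define a where "a = prod_encode (m,k)"
    define b where "b = prod_encode (n,j)"
    have ab: "a \<noteq> b" using that(1) unfolding a_def b_def
      by (metis inj_prod_encode inj_onD UNIV_I prod.inject)
    have "lp_pow p (g m k - g n j) = (\<Sum>i\<in>{a,b}. \<bar>(g m k - g n j) i\<bar> powr p)"
      by (rule lp_pow_superset) (auto simp: g_def a_def b_def)
    also have "\<dots> = \<bar>s k powr (1/p)\<bar> powr p + \<bar>s j powr (1/p)\<bar> powr p"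
      using ab by (simp add: g_def a_def[symmetric] b_def[symmetric])
    also have "\<dots> = s k + s j"
    proof -
      have "s k \<ge> 0" "s j \<ge> 0" using assms(3) that(2,3) by auto
      thus ?thesis using powr_inv_cancel[OF _ assms(1)] by presburger
    qed
    finally show ?thesis by simp
  qed
  show ?thesis
    by (rule exI[of _ g]) (use fs main in auto)
qed

end
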